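(* Let $E,A,B\in\mathbb{C}^{n,n}$ pairwise commute, $\tau>0$, and assume the initial value problem for the DDAE $E\dot x(t)=Ax(t)+Bx(t-\tau)+f(t)$, $t\in[0,\infty)$, $x|_{[-\tau,0]}=\varphi$, is uniquely solvable (for consistent, sufficiently smooth initial functions). Let $U\in\mathbb{C}^{n,n}$ be nonsingular with $UEU^{-1}=\mathrm{diag}(J^E,N^E_2,N^E_3,N^E_4)$, $UAU^{-1}=\mathrm{diag}(A_1,J^A,N^A_3,N^A_4)$, $UBU^{-1}=\mathrm{diag}(B_1,B_2,J^B,N^B_4)$, where $J^E,J^A,J^B$ are nonsingular and $N^E_2,N^E_3,N^E_4,N^A_3,N^A_4,N^B_4$ are nilpotent. Then the fourth diagonal blocks $N^E_4,N^A_4,N^B_4$ are absent (have size zero); consequently, in the transformed system the equation $N^E_4\dot x_4(t)=N^A_4x_4(t)+N^B_4x_4(t-\tau)+f_4(t)$ does not appear.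
   Context: Solutions are piecewise differentiable: continuous $x$ with $Ex$ piecewise continuously differentiable satisfying the equation for all $t\in[0,\infty)\setminus\bigcup_{j\in\mathbb{N}_0}\{j\tau\}$ (assumed $C^\infty$ on $[0,\infty)$ in the solvability analysis). An initial function is consistent if the IVP has at least one solution. Such a $U$ exists for any pairwise commuting triple. *)

theory Defs
  imports "HOL-Analysis.Analysis"
begin

definition smooth_on :: "real set \<Rightarrow> (real \<Rightarrow> 'a::real_normed_vector) \<Rightarrow> bool" where
  "smooth_on S g \<longleftrightarrow> (\<exists>D :: nat \<Rightarrow> real \<Rightarrow> 'a. D 0 = g \<and>
      (\<forall>k. \<forall>t\<in>S. (D k has_vector_derivative D (Suc k) t) (at t within S)))"

definition ddae_solution ::
  "complex^'n^'n \<Rightarrow> complex^'n^'n \<Rightarrow> complex^'n^'n \<Rightarrow> real \<Rightarrow>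
   (real \<Rightarrow> complex^'n) \<Rightarrow> (real \<Rightarrow> complex^'n) \<Rightarrow> (real \<Rightarrow> complex^'n) \<Rightarrow> bool" where
  "ddae_solution E A B \<tau> f \<phi> x \<longleftrightarrow>
     continuous_on {-\<tau>..} x \<and>
     (\<forall>t\<in>{-\<tau>..0}. x t = \<phi> t) \<and>
     (\<forall>T\<ge>0. (\<lambda>s. E *v x s) piecewise_C1_differentiable_on {0..T}) \<and>
     (\<forall>t. t \<ge> 0 \<longrightarrow> (\<forall>j::nat. t \<noteq> real j * \<tau>) \<longrightarrow>
        ((\<lambda>s. E *v x s) has_vector_derivative (A *v x t + B *v x (t - \<tau>) + f t)) (at t))"

definition consistent_initial ::
  "complex^'n^'n \<Rightarrow> complex^'n^'n \<Rightarrow> complex^'n^'n \<Rightarrow> real \<Rightarrow>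
   (real \<Rightarrow> complex^'n) \<Rightarrow> (real \<Rightarrow> complex^'n) \<Rightarrow> bool" where
  "consistent_initial E A B \<tau> f \<phi> \<longleftrightarrow> (\<exists>x. ddae_solution E A B \<tau> f \<phi> x)"

definition uniquely_solvable ::
  "complex^'n^'n \<Rightarrow> complex^'n^'n \<Rightarrow> complex^'n^'n \<Rightarrow> real \<Rightarrow> bool" where
  "uniquely_solvable E A B \<tau> \<longleftrightarrow>
     (\<forall>f \<phi>. smooth_on {0..} f \<longrightarrow> smooth_on {-\<tau>..0} \<phi> \<longrightarrow>
        consistent_initial E A B \<tau> f \<phi> \<longrightarrow>
        (\<exists>x. ddae_solution E A B \<tau> f \<phi> x \<and>
           (\<forall>y. ddae_solution E A B \<tau> f \<phi> y \<longrightarrow> (\<forall>t\<ge>-\<tau>. y t = x t))))"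

definition matpow :: "'a::semiring_1^'n^'n \<Rightarrow> nat \<Rightarrow> 'a^'n^'n" where
  "matpow M k = ((\<lambda>X. M ** X) ^^ k) (mat 1)"

definition block :: "'a::zero^'n^'n \<Rightarrow> 'n set \<Rightarrow> 'a^'n^'n" where
  "block M I = (\<chi> i j. if i \<in> I \<and> j \<in> I then M $ i $ j else 0)"

definition block_diagonal :: "'a::zero^'n^'n \<Rightarrow> 'n set list \<Rightarrow> bool" where
  "block_diagonal M Is \<longleftrightarrow> (\<forall>i j. (\<not> (\<exists>I\<in>set Is. i \<in> I \<and> j \<in> I)) \<longrightarrow> M $ i $ j = 0)"

text \<open>The list of index sets is a partition of all indices (blocks may be empty).\<close>
definition index_partition :: "'n set list \<Rightarrow> bool" where
  "index_partition Is \<longleftrightarrow> \<Union>(set Is) = UNIV \<and>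
     (\<forall>k<length Is. \<forall>l<length Is. k \<noteq> l \<longrightarrow> Is ! k \<inter> Is ! l = {})"

text \<open>The diagonal block of M on I is nonsingular (as a square matrix indexed by I).\<close>
definition nonsingular_block :: "'a::field^'n^'n \<Rightarrow> 'n set \<Rightarrow> bool" where
  "nonsingular_block M I \<longleftrightarrow> invertible (block M I + block (mat 1) (- I))"

definition nilpotent_block :: "'a::field^'n^'n \<Rightarrow> 'n set \<Rightarrow> bool" where
  "nilpotent_block M I \<longleftrightarrow> (\<exists>k. matpow (block M I) k = 0)"

end

theory Submission
  imports Defs
begin

lemma matpow_0[simp]: "matpow P 0 = mat 1" by (simp add: matpow_def)
lemma matpow_Suc: "matpow P (Suc k) = P ** matpow P k" by (simp add: matpow_def)
lemma matpow_Suc': "matpow P (Suc k) = matpow P k ** P"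
  by (induction k) (simp_all add: matpow_Suc matrix_mul_assoc)

lemma matpow_comm:
  fixes F P :: "'a::comm_semiring_1^'n^'n"
  assumes "F ** P = P ** F" shows "F ** matpow P a = matpow P a ** F"
proof (induction a)
  case 0 then show ?case by simp
next
  case (Suc a)
  have "F ** matpow P (Suc a) = (F ** P) ** matpow P a" by (simp add: matpow_Suc matrix_mul_assoc)
  also have "\<dots> = P ** (F ** matpow P a)" by (simp add: assms matrix_mul_assoc)
  also have "\<dots> = matpow P (Suc a) ** F" using Suc by (simp add: matpow_Suc matrix_mul_assoc)
  finally show ?case .
qed

lemma kill_step:
  fixes P M :: "'a::comm_semiring_1^'n^'n"
  shows "M \<noteq> 0 \<Longrightarrow> matpow P k ** M = 0 \<Longrightarrow> \<exists>a. matpow P a ** M \<noteq> 0 \<and> P ** (matpow P a ** M) = 0"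
proof (induction k arbitrary: M)
  case 0 then show ?case by simp
next
  case (Suc k)
  show ?case
  proof (cases "P ** M = 0")
    case True then show ?thesis using Suc.prems by (intro exI[of _ 0]) simp
  next
    case False
    have "matpow P k ** (P ** M) = 0" using Suc.prems(2) by (simp add: matpow_Suc' matrix_mul_assoc)
    from Suc.IH[OF False this] obtain a where "matpow P a ** (P ** M) \<noteq> 0"
      "P ** (matpow P a ** (P ** M)) = 0" by blast
    then show ?thesis by (intro exI[of _ "Suc a"]) (simp add: matpow_Suc' matrix_mul_assoc)
  qed
qed

lemma kill:
  fixes P M :: "'a::comm_semiring_1^'n^'n"
  assumes "M \<noteq> 0" "matpow P k = 0"
  shows "\<exists>a. matpow P a ** M \<noteq> 0 \<and> P ** (matpow P a ** M) = 0"
  using kill_step[of M P k] assms by simp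

lemma block_mul:
  fixes M :: "'a::comm_ring_1^'n^'n"
  assumes bd: "block_diagonal M [I1, I2, I3, I4]" and part: "index_partition [I1, I2, I3, I4]"
  shows "M ** block (mat 1) I4 = block M I4" "block (mat 1) I4 ** M = block M I4"
proof -
  have h: "\<forall>k<4. \<forall>l<4. k \<noteq> l \<longrightarrow> [I1, I2, I3, I4] ! k \<inter> [I1, I2, I3, I4] ! l = {}"
    using part unfolding index_partition_def by simp
  have dis: "I1 \<inter> I4 = {}" "I2 \<inter> I4 = {}" "I3 \<inter> I4 = {}"
    using h[rule_format, of 0 3] h[rule_format, of 1 3] h[rule_format, of 2 3] by simp_all
  have z: "M $ i $ j = 0" if "(i \<in> I4) \<noteq> (j \<in> I4)" for i j
  proof -
    have "\<not> (\<exists>I\<in>set [I1, I2, I3, I4]. i \<in> I \<and> j \<in> I)" using that dis by auto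
    then show ?thesis using bd unfolding block_diagonal_def by blast
  qed
  have s1: "(\<Sum>k\<in>UNIV. M $ i $ k * (if k \<in> I4 \<and> j \<in> I4 then mat 1 $ k $ j else 0))
      = (if j \<in> I4 then M $ i $ j else 0)" for i j
  proof -
    have eq: "(\<lambda>k. M $ i $ k * (if k \<in> I4 \<and> j \<in> I4 then mat 1 $ k $ j else 0))
      = (\<lambda>k. if k = j then (if j \<in> I4 then M $ i $ j else 0) else 0)"
      by (auto simp: mat_def fun_eq_iff)
    show ?thesis by (simp only: eq) simp
  qed
  have s2: "(\<Sum>k\<in>UNIV. (if i \<in> I4 \<and> k \<in> I4 then mat 1 $ i $ k else 0) * M $ k $ j)
      = (if i \<in> I4 then M $ i $ j else 0)" for i j
  proof -
    have eq: "(\<lambda>k. (if i \<in> I4 \<and> k \<in> I4 then mat 1 $ i $ k else 0) * M $ k $ j)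
      = (\<lambda>k. if k = i then (if i \<in> I4 then M $ i $ j else 0) else 0)"
      by (auto simp: mat_def fun_eq_iff)
    show ?thesis by (simp only: eq) simp
  qed
  show "M ** block (mat 1) I4 = block M I4"
    unfolding matrix_matrix_mult_def block_def vec_eq_iff using s1 z by auto
  show "block (mat 1) I4 ** M = block M I4"
    unfolding matrix_matrix_mult_def block_def vec_eq_iff using s2 z by auto
qed


lemma mv_scaleR:
  fixes E :: "complex^'n^'n"
  shows "E *v (c *\<^sub>R w) = c *\<^sub>R (E *v w)"
  unfolding vec_eq_iff matrix_vector_mult_def
  by (auto simp: scaleR_sum_right vector_scaleR_component intro!: sum.cong)

lemma mv_axis:
  fixes N :: "'a::comm_semiring_1^'n^'n"
  shows "(N *v axis j 1) $ i = N $ i $ j"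
  by (simp add: matrix_vector_mult_def axis_def if_distrib[where f="\<lambda>x. _ * x"] cong: if_cong)

lemma smooth_zero: "smooth_on S (\<lambda>_. 0)"
  unfolding smooth_on_def by (intro exI[of _ "\<lambda>k t. 0"]) auto

lemma common_null:
  fixes E A B U :: "complex^'n^'n" and I1 I2 I3 I4 :: "'n set"
  assumes comm_EA: "E ** A = A ** E"
    and comm_EB: "E ** B = B ** E"
    and comm_AB: "A ** B = B ** A"
    and U_inv: "invertible U"
    and part: "index_partition [I1, I2, I3, I4]"
    and E_diag: "block_diagonal (U ** E ** matrix_inv U) [I1, I2, I3, I4]"
    and A_diag: "block_diagonal (U ** A ** matrix_inv U) [I1, I2, I3, I4]"
    and B_diag: "block_diagonal (U ** B ** matrix_inv U) [I1, I2, I3, I4]"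
    and NE4: "nilpotent_block (U ** E ** matrix_inv U) I4"
    and NA4: "nilpotent_block (U ** A ** matrix_inv U) I4"
    and NB4: "nilpotent_block (U ** B ** matrix_inv U) I4"
    and ne: "I4 \<noteq> {}"
  shows "\<exists>w. w \<noteq> 0 \<and> E *v w = 0 \<and> A *v w = 0 \<and> B *v w = 0"
proof -
  define V where "V = matrix_inv U"
  have UV: "U ** V = mat 1" "V ** U = mat 1"
    using someI_ex[OF U_inv[unfolded invertible_def]] unfolding V_def matrix_inv_def by auto
  define E' where "E' = U ** E ** V"
  define A' where "A' = U ** A ** V"
  define B' where "B' = U ** B ** V"
  define D where "D = (block (mat 1) I4 :: complex^'n^'n)"
  have Dbd: "block_diagonal D [I1, I2, I3, I4]"
    unfolding block_diagonal_def D_def block_def by auto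
  have DD: "D ** D = D"
    using block_mul(1)[OF Dbd part] unfolding D_def by (simp add: block_def vec_eq_iff)
  have conj: "\<And>X Y. (U ** X ** V) ** (U ** Y ** V) = U ** (X ** Y) ** V"
  proof -
    fix X Y :: "complex^'n^'n"
    have "(U ** X ** V) ** (U ** Y ** V) = U ** X ** (V ** U) ** Y ** V"
      by (simp add: matrix_mul_assoc)
    then show "(U ** X ** V) ** (U ** Y ** V) = U ** (X ** Y) ** V"
      using UV by (simp add: matrix_mul_assoc)
  qed
  have cEA: "E' ** A' = A' ** E'" unfolding E'_def A'_def conj comm_EA ..
  have cEB: "E' ** B' = B' ** E'" unfolding E'_def B'_def conj comm_EB ..
  have cAB: "A' ** B' = B' ** A'" unfolding B'_def A'_def conj comm_AB ..
  define P where "P = block E' I4"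
  define Q where "Q = block A' I4"
  define R where "R = block B' I4"
  have P1: "P = E' ** D" "P = D ** E'"
    using block_mul[OF E_diag part] unfolding P_def D_def E'_def V_def by auto
  have Q1: "Q = A' ** D" "Q = D ** A'"
    using block_mul[OF A_diag part] unfolding Q_def D_def A'_def V_def by auto
  have R1: "R = B' ** D" "R = D ** B'"
    using block_mul[OF B_diag part] unfolding R_def D_def B'_def V_def by auto
  have gen: "(X ** D) ** (Y ** D) = (X ** Y) ** D" if "D ** Y = Y ** D" for X Y
  proof -
    have "(X ** D) ** (Y ** D) = X ** (D ** Y) ** D" by (simp add: matrix_mul_assoc)
    also have "\<dots> = X ** Y ** (D ** D)" using that by (simp add: matrix_mul_assoc)
    finally show ?thesis using DD by (simp add: matrix_mul_assoc)
  qed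
  have dE: "D ** E' = E' ** D" "D ** A' = A' ** D" "D ** B' = B' ** D" using P1 Q1 R1 by auto
  have PQ: "P ** Q = Q ** P" using gen[OF dE(2), of E'] gen[OF dE(1), of A'] P1 Q1 cEA by simp
  have PR: "P ** R = R ** P" using gen[OF dE(3), of E'] gen[OF dE(1), of B'] P1 R1 cEB by simp
  have QR: "Q ** R = R ** Q" using gen[OF dE(3), of A'] gen[OF dE(2), of B'] Q1 R1 cAB by simp
  have DP: "D ** P = P ** D" "D ** Q = Q ** D" "D ** R = R ** D"
  proof -
    have "D ** (D ** X) = D ** X" "(X ** D) ** D = X ** D" for X
      using DD by (simp_all add: matrix_mul_assoc[symmetric] matrix_mul_assoc)
    then show "D ** P = P ** D" "D ** Q = Q ** D" "D ** R = R ** D"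
      using P1 Q1 R1 by metis+
  qed
  obtain i0 where i0: "i0 \<in> I4" using ne by blast
  have D0: "D \<noteq> 0"
  proof
    assume "D = 0"
    then have "D $ i0 $ i0 = 0" by simp
    then show False using i0 by (simp add: D_def block_def mat_def)
  qed
  obtain kP where kP: "matpow P kP = 0" using NE4 unfolding nilpotent_block_def P_def E'_def V_def by blast
  obtain kQ where kQ: "matpow Q kQ = 0" using NA4 unfolding nilpotent_block_def Q_def A'_def V_def by blast
  obtain kR where kR: "matpow R kR = 0" using NB4 unfolding nilpotent_block_def R_def B'_def V_def by blast
  obtain a where a: "matpow P a ** D \<noteq> 0" "P ** (matpow P a ** D) = 0" using kill[OF D0 kP] by blast
  define N1 where "N1 = matpow P a ** D"
  obtain b where b: "matpow Q b ** N1 \<noteq> 0" "Q ** (matpow Q b ** N1) = 0"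
    using kill[OF _ kQ] a N1_def by blast
  define N2 where "N2 = matpow Q b ** N1"
  obtain c where c: "matpow R c ** N2 \<noteq> 0" "R ** (matpow R c ** N2) = 0"
    using kill[OF _ kR] b N2_def by blast
  define N3 where "N3 = matpow R c ** N2"
  have comm3: "F ** N3 = matpow R c ** (matpow Q b ** (matpow P a ** (F ** D)))"
    if "F ** P = P ** F" "F ** Q = Q ** F" "F ** R = R ** F" for F
  proof -
    have "F ** N3 = (F ** matpow R c) ** N2" unfolding N3_def by (simp add: matrix_mul_assoc)
    also have "\<dots> = matpow R c ** ((F ** matpow Q b) ** N1)"
      unfolding N2_def using matpow_comm[OF that(3)] by (simp add: matrix_mul_assoc)
    also have "\<dots> = matpow R c ** (matpow Q b ** ((F ** matpow P a) ** D))"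
      unfolding N1_def using matpow_comm[OF that(2)] by (simp add: matrix_mul_assoc)
    also have "\<dots> = matpow R c ** (matpow Q b ** (matpow P a ** (F ** D)))"
      using matpow_comm[OF that(1)] by (simp add: matrix_mul_assoc)
    finally show ?thesis .
  qed
  have PN3: "P ** N3 = 0"
  proof -
    have e: "matpow P a ** P = P ** matpow P a" using matpow_comm[of P P a] by simp
    have "P ** N3 = matpow R c ** (matpow Q b ** ((matpow P a ** P) ** D))"
      using comm3[of P] PQ PR by (simp add: matrix_mul_assoc)
    also have "\<dots> = matpow R c ** (matpow Q b ** (P ** (matpow P a ** D)))"
      unfolding e by (simp add: matrix_mul_assoc)
    finally show ?thesis using a(2) by simp
  qed
  have QN3: "Q ** N3 = 0"
  proof -
    have "Q ** N3 = matpow R c ** (Q ** (matpow Q b ** N1))"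
      unfolding N3_def N2_def using matpow_comm[OF QR] by (simp add: matrix_mul_assoc)
    then show ?thesis using b(2) by simp
  qed
  have RN3: "R ** N3 = 0" using c N3_def by simp
  have DN3: "D ** N3 = N3"
    using comm3[of D] DP DD unfolding N3_def N2_def N1_def by (simp add: matrix_mul_assoc)
  have E'N3: "E' ** N3 = 0"
  proof -
    have "E' ** N3 = (E' ** D) ** N3" using DN3 by (metis matrix_mul_assoc)
    then show ?thesis using PN3 P1(1) by simp
  qed
  have A'N3: "A' ** N3 = 0"
  proof -
    have "A' ** N3 = (A' ** D) ** N3" using DN3 by (metis matrix_mul_assoc)
    then show ?thesis using QN3 Q1(1) by simp
  qed
  have B'N3: "B' ** N3 = 0"
  proof -
    have "B' ** N3 = (B' ** D) ** N3" using DN3 by (metis matrix_mul_assoc)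
    then show ?thesis using RN3 R1(1) by simp
  qed
  have "N3 \<noteq> 0" using c N3_def by simp
  then obtain i j where ij: "N3 $ i $ j \<noteq> 0" by (metis vec_eq_iff zero_index)
  define v where "v = N3 *v axis j 1"
  have v0: "v \<noteq> 0"
  proof
    assume "v = 0" then have "v $ i = 0" by simp
    then show False using ij mv_axis[of N3 j i] v_def by simp
  qed
  define w where "w = V *v v"
  have Uw: "U *v w = v" unfolding w_def by (simp add: matrix_vector_mul_assoc UV)
  have w0: "w \<noteq> 0" using Uw v0 by auto
  have bk: "X *v w = V *v ((U ** X ** V) *v v)" for X
  proof -
    have "V ** (U ** X ** V) = X ** V" using UV by (simp add: matrix_mul_assoc)
    then show ?thesis unfolding w_def by (simp add: matrix_vector_mul_assoc)
  qed
  have "E *v w = 0" using bk[of E] E'N3 unfolding E'_def v_def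
    by (simp add: matrix_vector_mul_assoc)
  moreover have "A *v w = 0" using bk[of A] A'N3 unfolding A'_def v_def
    by (simp add: matrix_vector_mul_assoc)
  moreover have "B *v w = 0" using bk[of B] B'N3 unfolding B'_def v_def
    by (simp add: matrix_vector_mul_assoc)
  ultimately show ?thesis using w0 by blast
qed

theorem corollary4:
  fixes E A B U :: "complex^'n^'n" and \<tau> :: real and I1 I2 I3 I4 :: "'n set"
  assumes comm_EA: "E ** A = A ** E"
    and comm_EB: "E ** B = B ** E"
    and comm_AB: "A ** B = B ** A"
    and tau_pos: "\<tau> > 0"
    and uniq: "uniquely_solvable E A B \<tau>"
    and U_inv: "invertible U"
    and part: "index_partition [I1, I2, I3, I4]"
    and E_diag: "block_diagonal (U ** E ** matrix_inv U) [I1, I2, I3, I4]"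
    and A_diag: "block_diagonal (U ** A ** matrix_inv U) [I1, I2, I3, I4]"
    and B_diag: "block_diagonal (U ** B ** matrix_inv U) [I1, I2, I3, I4]"
    and JE: "nonsingular_block (U ** E ** matrix_inv U) I1"
    and NE2: "nilpotent_block (U ** E ** matrix_inv U) I2"
    and NE3: "nilpotent_block (U ** E ** matrix_inv U) I3"
    and NE4: "nilpotent_block (U ** E ** matrix_inv U) I4"
    and JA: "nonsingular_block (U ** A ** matrix_inv U) I2"
    and NA3: "nilpotent_block (U ** A ** matrix_inv U) I3"
    and NA4: "nilpotent_block (U ** A ** matrix_inv U) I4"
    and JB: "nonsingular_block (U ** B ** matrix_inv U) I3"
    and NB4: "nilpotent_block (U ** B ** matrix_inv U) I4"
  shows "I4 = {}"
proof (rule ccontr)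
  assume ne: "I4 \<noteq> {}"
  obtain w where w: "w \<noteq> 0" "E *v w = 0" "A *v w = 0" "B *v w = 0"
    using common_null[OF comm_EA comm_EB comm_AB U_inv part E_diag A_diag B_diag NE4 NA4 NB4 ne] by blast
  define f :: "real \<Rightarrow> complex^'n" where "f = (\<lambda>_. 0)"
  define \<phi> :: "real \<Rightarrow> complex^'n" where "\<phi> = (\<lambda>_. 0)"
  have sol: "ddae_solution E A B \<tau> f \<phi> (\<lambda>t. (max t 0) *\<^sub>R w)"
  proof -
    have ex: "(\<lambda>s. E *v ((max s 0) *\<^sub>R w)) = (\<lambda>s. 0)" using w by (simp add: mv_scaleR)
    show ?thesis unfolding ddae_solution_def ex f_def \<phi>_def
      using w by (auto simp: mv_scaleR piecewise_C1_differentiable_const intro!: continuous_intros)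
  qed
  have sol0: "ddae_solution E A B \<tau> f \<phi> (\<lambda>t. 0)"
    unfolding ddae_solution_def f_def \<phi>_def
    by (auto simp: piecewise_C1_differentiable_const)
  have "consistent_initial E A B \<tau> f \<phi>" using sol0 unfolding consistent_initial_def by blast
  then obtain x where x: "\<forall>y. ddae_solution E A B \<tau> f \<phi> y \<longrightarrow> (\<forall>t\<ge>-\<tau>. y t = x t)"
    using uniq smooth_zero unfolding uniquely_solvable_def f_def \<phi>_def by blast
  have "(max 1 0) *\<^sub>R w = x 1" "(0::complex^'n) = x 1"
  proof -
    have "(1::real) \<ge> - \<tau>" using tau_pos by simp
    then show "(max 1 0) *\<^sub>R w = x 1" "(0::complex^'n) = x 1"
      using x sol sol0 by blast+
  qed
  then show False using w by simp
qed

end
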